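(* Consider the general load coupling model with JT described in the context. Let $\bm\kappa,\bm\kappa'\in\{0,1\}^{n\times m}$ be JT patterns such that, for some cell $i$ and UE $j$, $\kappa_{ij}=0$, $\kappa'_{ij}=1$, and $\kappa'_{hl}=\kappa_{hl}$ for all $(h,l)\neq(i,j)$. Let $\widetilde{\bm{x}}\in\mathbb{R}^n_{\ge0}$ satisfy $\widetilde{\bm{x}}=\bm{f}^{\bm\kappa}\big(\bm{h}^{\bm\kappa}(\widetilde{\bm{x}})\big)$ and $\bm{x}\in\mathbb{R}^n_{\ge0}$ satisfy $\bm{x}=\bm{f}^{\bm{\kappa'}}\big(\bm{h}^{\bm{\kappa'}}(\bm{x})\big)$. Define the sequence $\bm{x}^{(0)}=\widetilde{\bm{x}}$ and $\bm{x}^{(t)}=\bm{f}^{\bm\kappa}\big(\bm{h}^{\bm{\kappa'}}(\bm{x}^{(t-1)})\big)$ for $t\ge1$. If there exists $k\geq 1$ such that $f^{\bm{\kappa'}}_i\big(\bm{h}^{\bm{\kappa'}}(\bm{x}^{(k)})\big)\leq x^{(k)}_i$, then $\bm{x}\leq\widetilde{\bm{x}}$ componentwise.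
   Context: There are $n$ cells and $m$ UEs. Cell $i$ has transmit power per resource block $p_i>0$, $g_{ij}>0$ is the channel gain between cell $i$ and UE $j$, $d_j>0$ is the (normalized) bitrate demand of UE $j$, and $\sigma^2>0$ is the noise power. A JT pattern is a matrix $\bm\kappa\in\{0,1\}^{n\times m}$, where $\kappa_{ij}=1$ means cell $i$ serves UE $j$; every UE is assumed to be served by at least one cell. For a pattern $\bm\kappa$, the cell load function $\bm f^{\bm\kappa}=(f^{\bm\kappa}_1,\dots,f^{\bm\kappa}_n)$ and SINR function $\bm h^{\bm\kappa}=(h^{\bm\kappa}_1,\dots,h^{\bm\kappa}_m)$ are $f_i^{\bm{\kappa}}(\bm{\gamma})=\sum_{j=1}^{m}\frac{\kappa_{ij}d_j}{\log_2\left(1+\gamma_j\right)}$, $\quad h_j^{\bm{\kappa}}(\bm{x})=\frac{\sum_{i=1}^{n}p_ig_{ij}\kappa_{ij}}{\sum_{k=1}^{n}p_kg_{kj}x_{k}(1-\kappa_{kj})+\sigma^2}$, for $\bm\gamma\in\mathbb{R}^m_{>0}$ and $\bm x\in\mathbb{R}^n_{\ge0}$. A fixed point $\bm x=\bm f^{\bm\kappa}(\bm h^{\bm\kappa}(\bm x))$ is the network-wide cell load vector for pattern $\bm\kappa$. Vector inequalities are componentwise. *)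

theory Defs
  imports "HOL-Analysis.Analysis"
begin

text \<open>Cells are indexed by 0..<n, UEs by 0..<m. A JT pattern is a 0/1 matrix,
  represented as a boolean-valued function kappa i j (true = cell i serves UE j).
  Vectors are functions nat => real; only the indices below n (resp. m) matter.\<close>

definition ind :: "bool \<Rightarrow> real" where
  "ind b = (if b then 1 else 0)"

definition load_f :: "nat \<Rightarrow> (nat \<Rightarrow> real) \<Rightarrow> (nat \<Rightarrow> nat \<Rightarrow> bool) \<Rightarrow> (nat \<Rightarrow> real) \<Rightarrow> nat \<Rightarrow> real" where
  "load_f m d kappa gamma i = (\<Sum>j<m. ind (kappa i j) * d j / log 2 (1 + gamma j))"

definition sinr_h :: "nat \<Rightarrow> (nat \<Rightarrow> real) \<Rightarrow> (nat \<Rightarrow> nat \<Rightarrow> real) \<Rightarrow> real \<Rightarrow> (nat \<Rightarrow> nat \<Rightarrow> bool) \<Rightarrow> (nat \<Rightarrow> real) \<Rightarrow> nat \<Rightarrow> real" where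
  "sinr_h n p g sigma2 kappa x j =
     (\<Sum>i<n. p i * g i j * ind (kappa i j)) /
     ((\<Sum>k<n. p k * g k j * x k * (1 - ind (kappa k j))) + sigma2)"

end

theory Submission
  imports Defs
begin

lemma ln_conc: fixes t a :: real assumes "t > 0" "a > 1"
  shows "ln (1+t) / a \<le> ln (1 + t/a)"
proof -
  have "(1/a) * ln (1+t) + (1 - 1/a) * ln 1 \<le> ln ((1/a) * (1+t) + (1 - 1/a) * 1)"
    using ln_concave assms unfolding concave_on_iff
    apply (elim conjE)
    apply (drule bspec[of _ _ "1+t"], simp)
    apply (drule bspec[of _ _ 1], simp)
    apply (drule spec[of _ "1/a"]) apply (drule mp, simp)
    apply (drule spec[of _ "1-1/a"]) apply (drule mp, simp)
    by simp
  moreover have eq: "(1/a) * (1+t) + (1 - 1/a) * 1 = 1 + t/a" using assms by (simp add: field_simps)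
  ultimately show ?thesis unfolding eq by simp
qed

lemma log_conc: fixes t a :: real assumes "t > 0" "a > 1"
  shows "log 2 (1+t) / a \<le> log 2 (1 + t/a)"
  using ln_conc[OF assms] by (simp add: log_def divide_right_mono field_simps)

lemma logp: "(t::real) > 0 \<Longrightarrow> log 2 (1 + t) > 0" by simp

lemma ind_ge0: "ind b \<ge> 0" and ind_le1: "ind b \<le> 1" by (auto simp: ind_def)

lemma load_anti: assumes "\<forall>b<m. 0 < gam b \<and> gam b \<le> gam' b" "\<forall>b<m. d b > 0"
  shows "load_f m d kap gam' a \<le> load_f m d kap gam a"
  unfolding load_f_def
proof (rule sum_mono)
  fix b assume "b \<in> {..<m}"
  then have b: "b<m" by simp
  have l: "0 < log 2 (1 + gam b)" using assms b by (intro logp) simp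
  have "log 2 (1 + gam b) \<le> log 2 (1 + gam' b)" using assms b by (subst log_le_cancel_iff) auto
  then have "c / log 2 (1 + gam' b) \<le> c / log 2 (1 + gam b)" if "c \<ge> 0" for c
    using l that by (intro divide_left_mono) auto
  then show "ind (kap a b) * d b / log 2 (1 + gam' b) \<le> ind (kap a b) * d b / log 2 (1 + gam b)"
    using assms b ind_ge0[of "kap a b"] by (simp add: less_imp_le)
qed

lemma load_nn: assumes "\<forall>b<m. 0 < gam b" "\<forall>b<m. d b > 0"
  shows "load_f m d kap gam a \<ge> 0"
  unfolding load_f_def
  apply (rule sum_nonneg)
  using assms ind_ge0[of "kap a _"] logp[of "gam _"]
  by (intro divide_nonneg_pos mult_nonneg_nonneg) (auto simp: less_imp_le)

context
  fixes n m :: nat and p :: "nat \<Rightarrow> real" and g :: "nat \<Rightarrow> nat \<Rightarrow> real" and d :: "nat \<Rightarrow> real"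
    and sigma2 :: real
  assumes p_pos: "\<forall>a<n. p a > 0"
    and g_pos: "\<forall>a<n. \<forall>b<m. g a b > 0"
    and d_pos: "\<forall>b<m. d b > 0"
    and sigma_pos: "sigma2 > 0"
begin

lemma den_nn: "\<forall>a<n. y a \<ge> 0 \<Longrightarrow> b<m \<Longrightarrow> (\<Sum>k<n. p k * g k b * y k * (1 - ind (kap k b))) \<ge> 0"
  apply (rule sum_nonneg)
  using p_pos g_pos ind_le1[of "kap _ b"]
  by (simp add: less_imp_le)

lemma num_pos: "b<m \<Longrightarrow> \<exists>a<n. kap a b \<Longrightarrow> (\<Sum>i<n. p i * g i b * ind (kap i b)) > 0"
proof -
  assume b: "b<m" and "\<exists>a<n. kap a b"
  then obtain a where a: "a<n" "kap a b" by auto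
  show ?thesis
    apply (rule sum_pos2[of _ a])
    using a b p_pos g_pos by (auto simp: ind_def less_imp_le)
qed

lemma sinr_pos: "\<forall>a<n. y a \<ge> 0 \<Longrightarrow> b<m \<Longrightarrow> \<exists>a<n. kap a b \<Longrightarrow> sinr_h n p g sigma2 kap y b > 0"
  unfolding sinr_h_def using num_pos[of b kap] den_nn[of y b kap] sigma_pos by simp

lemma sinr_anti: assumes "\<forall>a<n. y a \<ge> 0" "\<forall>a<n. y a \<le> y' a" "b<m"
  shows "sinr_h n p g sigma2 kap y' b \<le> sinr_h n p g sigma2 kap y b"
  unfolding sinr_h_def
proof (rule frac_le)
  show "0 \<le> (\<Sum>i<n. p i * g i b * ind (kap i b))"
    apply (rule sum_nonneg) using p_pos g_pos assms(3) ind_ge0[of "kap _ b"] by (simp add: less_imp_le)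
  show "0 < (\<Sum>k<n. p k * g k b * y k * (1 - ind (kap k b))) + sigma2"
    using den_nn[OF assms(1,3), where kap=kap] sigma_pos by simp
  have "(\<Sum>k<n. p k * g k b * y k * (1 - ind (kap k b))) \<le> (\<Sum>k<n. p k * g k b * y' k * (1 - ind (kap k b)))"
  proof (rule sum_mono)
    fix k assume "k \<in> {..<n}"
    then have k: "k<n" by simp
    have "0 \<le> p k * g k b" using p_pos g_pos k assms(3) by (simp add: less_imp_le)
    then have "p k * g k b * y k \<le> p k * g k b * y' k" using assms(2) k by (simp add: mult_left_mono)
    then show "p k * g k b * y k * (1 - ind (kap k b)) \<le> p k * g k b * y' k * (1 - ind (kap k b))"
      using ind_le1[of "kap k b"] by (simp add: mult_right_mono)
  qed
  then show "(\<Sum>k<n. p k * g k b * y k * (1 - ind (kap k b))) + sigma2 \<le> (\<Sum>k<n. p k * g k b * y' k * (1 - ind (kap k b))) + sigma2"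
    by simp
qed simp

lemma sinr_kmono: assumes "\<forall>a<n. kap a b \<longrightarrow> kap' a b" "\<forall>a<n. y a \<ge> 0" "b<m"
  shows "sinr_h n p g sigma2 kap y b \<le> sinr_h n p g sigma2 kap' y b"
  unfolding sinr_h_def
proof (rule frac_le)
  have le: "ind (kap a b) \<le> ind (kap' a b)" if "a<n" for a using assms(1) that by (auto simp: ind_def)
  show "0 \<le> (\<Sum>i<n. p i * g i b * ind (kap' i b))"
    apply (rule sum_nonneg) using p_pos g_pos assms(3) ind_ge0[of "kap' _ b"] by (simp add: less_imp_le)
  show "(\<Sum>i<n. p i * g i b * ind (kap i b)) \<le> (\<Sum>i<n. p i * g i b * ind (kap' i b))"
    apply (rule sum_mono) using p_pos g_pos assms(3) le by (simp add: less_imp_le mult_left_mono)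
  show "0 < (\<Sum>k<n. p k * g k b * y k * (1 - ind (kap' k b))) + sigma2"
    using den_nn[OF assms(2,3), where kap=kap'] sigma_pos by simp
  show "(\<Sum>k<n. p k * g k b * y k * (1 - ind (kap' k b))) + sigma2 \<le> (\<Sum>k<n. p k * g k b * y k * (1 - ind (kap k b))) + sigma2"
    apply (simp, rule sum_mono)
    using p_pos g_pos assms(2,3) le
    by (simp add: less_imp_le mult_left_mono)
qed


lemma term_le: fixes u L L' a :: real
  assumes "0 < L" "1 < a" "L / a < L'" "0 \<le> u"
  shows "u / L' \<le> a * (u / L)" "0 < u \<Longrightarrow> u / L' < a * (u / L)"
proof -
  have Lp: "0 < L / a" using assms by simp
  have e: "a * (u / L) = u / (L / a)" by simp
  have L': "0 < L'" using assms Lp by linarith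
  have pp: "0 < L' * (L / a)" using L' Lp by (rule mult_pos_pos)
  show "0 < u \<Longrightarrow> u / L' < a * (u / L)"
    unfolding e using assms pp by (intro divide_strict_left_mono) auto
  show "u / L' \<le> a * (u / L)"
    unfolding e using assms pp by (intro divide_left_mono) auto
qed

lemma H_mono: assumes "\<forall>b<m. \<exists>a<n. kB a b" "\<forall>a<n. y a \<ge> 0" "\<forall>a<n. y a \<le> y' a"
  shows "load_f m d kA (sinr_h n p g sigma2 kB y) a \<le> load_f m d kA (sinr_h n p g sigma2 kB y') a"
proof (rule load_anti)
  have y': "\<forall>a<n. y' a \<ge> 0" using assms(2,3) by force
  show "\<forall>b<m. 0 < sinr_h n p g sigma2 kB y' b \<and> sinr_h n p g sigma2 kB y' b \<le> sinr_h n p g sigma2 kB y b"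
    using sinr_pos[OF y'] sinr_anti[OF assms(2,3)] assms(1) by auto
qed (use d_pos in auto)

lemma H_nn: assumes "\<forall>b<m. \<exists>a<n. kB a b" "\<forall>a<n. y a \<ge> 0"
  shows "load_f m d kA (sinr_h n p g sigma2 kB y) a \<ge> 0"
  using sinr_pos[OF assms(2)] assms(1) d_pos by (intro load_nn) auto

lemma H_pos: assumes "\<forall>b<m. \<exists>a<n. kB a b" "\<forall>a<n. y a \<ge> 0" "\<exists>b<m. kA a b"
  shows "load_f m d kA (sinr_h n p g sigma2 kB y) a > 0"
proof -
  obtain b where b: "b<m" "kA a b" using assms(3) by auto
  have sp: "\<forall>b<m. sinr_h n p g sigma2 kB y b > 0" using sinr_pos[OF assms(2)] assms(1) by auto
  show ?thesis unfolding load_f_def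
    apply (rule sum_pos2[of _ b])
    using b sp d_pos logp ind_ge0
    by (auto simp: ind_def intro!: divide_nonneg_pos divide_pos_pos mult_nonneg_nonneg less_imp_le)
qed

lemma H_zero: "\<not> (\<exists>b<m. kA a b) \<Longrightarrow> load_f m d kA gam a = 0"
  unfolding load_f_def by (auto simp: ind_def intro!: sum.neutral)

lemma sinr_scale: assumes "\<forall>a<n. y a \<ge> 0" "b<m" "\<exists>a<n. kap a b" "(al::real) > 1"
  shows "sinr_h n p g sigma2 kap y b / al < sinr_h n p g sigma2 kap (\<lambda>k. al * y k) b"
proof -
  define N where "N = (\<Sum>i<n. p i * g i b * ind (kap i b))"
  define D where "D = (\<Sum>k<n. p k * g k b * y k * (1 - ind (kap k b)))"
  have N: "N > 0" unfolding N_def using num_pos assms by auto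
  have D: "D \<ge> 0" unfolding D_def using den_nn assms by auto
  have aD: "(\<Sum>k<n. p k * g k b * (al * y k) * (1 - ind (kap k b))) = al * D"
    unfolding D_def sum_distrib_left by (rule sum.cong) auto
  have l: "sinr_h n p g sigma2 kap (\<lambda>k. al * y k) b = N / (al * D + sigma2)"
    unfolding sinr_h_def N_def aD ..
  have r: "sinr_h n p g sigma2 kap y b / al = N / ((D + sigma2) * al)"
    unfolding sinr_h_def N_def D_def by simp
  have s1: "sigma2 < sigma2 * al" using sigma_pos assms(4) by simp
  have h1: "al * D + sigma2 < (D + sigma2) * al" using s1 by (simp add: algebra_simps)
  have h2: "0 < al * D + sigma2" using D sigma_pos assms(4) by (simp add: add_nonneg_pos)
  have h3: "0 < (D + sigma2) * al" using D sigma_pos assms(4) by simp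
  show ?thesis unfolding l r
    apply (rule divide_strict_left_mono)
    using N h1 h2 h3 by (auto intro!: mult_pos_pos)
qed

lemma H_scale: assumes "\<forall>b<m. \<exists>a<n. kB a b" "\<forall>a<n. y a \<ge> 0" "\<exists>b<m. kA a b" "(al::real) > 1"
  shows "load_f m d kA (sinr_h n p g sigma2 kB (\<lambda>k. al * y k)) a < al * load_f m d kA (sinr_h n p g sigma2 kB y) a"
  unfolding load_f_def sum_distrib_left
proof (rule sum_strict_mono_ex1)
  have key: "ind (kA a b) * d b / log 2 (1 + sinr_h n p g sigma2 kB (\<lambda>k. al * y k) b)
      \<le> al * (ind (kA a b) * d b / log 2 (1 + sinr_h n p g sigma2 kB y b))
    \<and> (kA a b \<longrightarrow> ind (kA a b) * d b / log 2 (1 + sinr_h n p g sigma2 kB (\<lambda>k. al * y k) b)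
      < al * (ind (kA a b) * d b / log 2 (1 + sinr_h n p g sigma2 kB y b)))" if b: "b<m" for b
  proof -
    let ?s = "sinr_h n p g sigma2 kB y b" and ?s' = "sinr_h n p g sigma2 kB (\<lambda>k. al * y k) b"
    have sp: "?s > 0" using sinr_pos[OF assms(2) b] assms(1) b by auto
    have lt: "?s / al < ?s'" using sinr_scale[OF assms(2) b _ assms(4)] assms(1) b by auto
    have sa: "0 < ?s / al" using sp assms(4) by simp
    have "log 2 (1 + ?s) / al \<le> log 2 (1 + ?s / al)" using log_conc[OF sp assms(4)] .
    also have "\<dots> < log 2 (1 + ?s')" using lt sa by (subst log_less_cancel_iff) auto
    finally have c: "log 2 (1 + ?s) / al < log 2 (1 + ?s')" .
    have L: "0 < log 2 (1 + ?s)" using logp[OF sp] .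
    have u: "0 \<le> ind (kA a b) * d b" using ind_ge0 d_pos b by (simp add: less_imp_le)
    show ?thesis using term_le[OF L assms(4) c u] d_pos b by (auto simp: ind_def)
  qed
  then show "\<forall>b\<in>{..<m}. ind (kA a b) * d b / log 2 (1 + sinr_h n p g sigma2 kB (\<lambda>k. al * y k) b)
      \<le> al * (ind (kA a b) * d b / log 2 (1 + sinr_h n p g sigma2 kB y b))" by auto
  show "\<exists>b\<in>{..<m}. ind (kA a b) * d b / log 2 (1 + sinr_h n p g sigma2 kB (\<lambda>k. al * y k) b)
      < al * (ind (kA a b) * d b / log 2 (1 + sinr_h n p g sigma2 kB y b))"
  proof -
    obtain b where b: "b<m" "kA a b" using assms(3) by auto
    then show ?thesis using key[OF b(1)] by blast
  qed
qed simp


lemma fixed_le: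
  assumes sv: "\<forall>b<m. \<exists>a<n. kap a b"
    and xn: "\<forall>a<n. x a \<ge> 0" and xf: "\<forall>a<n. x a = load_f m d kap (sinr_h n p g sigma2 kap x) a"
    and zn: "\<forall>a<n. z a \<ge> 0" and zf: "\<forall>a<n. load_f m d kap (sinr_h n p g sigma2 kap z) a \<le> z a"
  shows "\<forall>a<n. x a \<le> z a"
proof -
  have Z: "x a = 0" if a: "a<n" "z a = 0" for a
  proof (cases "\<exists>b<m. kap a b")
    case True
    then show ?thesis using H_pos[where kA=kap and a=a, OF sv zn True] zf a by force
  next
    case False
    then show ?thesis using H_zero[where kA=kap and a=a, OF False] xf a by simp
  qed
  define A where "A = {a. a<n \<and> z a > 0}"
  define al where "al = Max (insert 1 ((\<lambda>a. x a / z a) ` A))"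
  have fin: "finite (insert 1 ((\<lambda>a. x a / z a) ` A))" unfolding A_def by simp
  have al1: "al \<ge> 1" unfolding al_def using fin by simp
  have le: "x a \<le> al * z a" if a: "a<n" for a
  proof (cases "z a = 0")
    case True then show ?thesis using Z a by simp
  next
    case False
    then have aA: "a \<in> A" using zn a unfolding A_def by force
    have "x a / z a \<le> al" unfolding al_def using fin aA by (intro Max_ge) auto
    then show ?thesis using aA unfolding A_def by (simp add: pos_divide_le_eq)
  qed
  show ?thesis
  proof (cases "al > 1")
    case False
    then have "al = 1" using al1 by simp
    then show ?thesis using le by simp
  next
    case True
    have "al \<in> insert 1 ((\<lambda>a. x a / z a) ` A)" unfolding al_def using fin by (intro Max_in) auto
    then obtain a where aA: "a \<in> A" and ala: "al = x a / z a" using True by auto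
    have a: "a<n" "z a > 0" using aA unfolding A_def by auto
    have xa: "x a = al * z a" using ala a by simp
    have row: "\<exists>b<m. kap a b"
    proof (rule ccontr)
      assume "\<not> (\<exists>b<m. kap a b)"
      then have "x a = 0" using H_zero xf a by simp
      then show False using xa True a by simp
    qed
    have "x a = load_f m d kap (sinr_h n p g sigma2 kap x) a" using xf a by simp
    also have "\<dots> \<le> load_f m d kap (sinr_h n p g sigma2 kap (\<lambda>k. al * z k)) a"
      using le by (intro H_mono[OF sv xn]) auto
    also have "\<dots> < al * load_f m d kap (sinr_h n p g sigma2 kap z) a"
      by (rule H_scale[where kA=kap and a=a, OF sv zn row True])
    also have "\<dots> \<le> al * z a" using zf a True by simp
    finally show ?thesis using xa by simp
  qed
qed

end

theorem theorem3:
  fixes n m :: nat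
    and p :: "nat \<Rightarrow> real" and g :: "nat \<Rightarrow> nat \<Rightarrow> real" and d :: "nat \<Rightarrow> real"
    and sigma2 :: real
    and kappa kappa' :: "nat \<Rightarrow> nat \<Rightarrow> bool"
    and i j :: nat
    and xt x :: "nat \<Rightarrow> real"
  assumes p_pos: "\<forall>a<n. p a > 0"
    and g_pos: "\<forall>a<n. \<forall>b<m. g a b > 0"
    and d_pos: "\<forall>b<m. d b > 0"
    and sigma_pos: "sigma2 > 0"
    and served: "\<forall>b<m. \<exists>a<n. kappa a b"
    and served': "\<forall>b<m. \<exists>a<n. kappa' a b"
    and ij: "i < n" "j < m"
    and kij: "\<not> kappa i j" and kij': "kappa' i j"
    and same: "\<forall>a<n. \<forall>b<m. (a, b) \<noteq> (i, j) \<longrightarrow> kappa' a b = kappa a b"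
    and xt_nonneg: "\<forall>a<n. xt a \<ge> 0"
    and xt_fix: "\<forall>a<n. xt a = load_f m d kappa (sinr_h n p g sigma2 kappa xt) a"
    and x_nonneg: "\<forall>a<n. x a \<ge> 0"
    and x_fix: "\<forall>a<n. x a = load_f m d kappa' (sinr_h n p g sigma2 kappa' x) a"
    and seq: "\<exists>k\<ge>1. load_f m d kappa' (sinr_h n p g sigma2 kappa'
                 (((\<lambda>y. load_f m d kappa (sinr_h n p g sigma2 kappa' y)) ^^ k) xt)) i
               \<le> (((\<lambda>y. load_f m d kappa (sinr_h n p g sigma2 kappa' y)) ^^ k) xt) i"
  shows "\<forall>a<n. x a \<le> xt a"
proof -
  note L = p_pos g_pos d_pos sigma_pos
  define F where "F = (\<lambda>y. load_f m d kappa (sinr_h n p g sigma2 kappa' y))"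
  define X where "X t = (F ^^ t) xt" for t
  have XS: "X (Suc t) = F (X t)" for t unfolding X_def by simp
  have nn: "\<forall>a<n. X t a \<ge> 0" for t
  proof (induction t)
    case 0 then show ?case using xt_nonneg unfolding X_def by simp
  next
    case (Suc t) then show ?case unfolding XS F_def using H_nn[OF L served'] by auto
  qed
  have kk: "\<forall>a<n. kappa a b \<longrightarrow> kappa' a b" if "b<m" for b
    using same kij that by (metis prod.inject)
  have sk: "sinr_h n p g sigma2 kappa xt b \<le> sinr_h n p g sigma2 kappa' xt b" if "b<m" for b
    using sinr_kmono[where kap=kappa and kap'=kappa' and b=b and y=xt, OF L kk[OF that] xt_nonneg that] .
  have F0: "\<forall>a<n. F xt a \<le> xt a"
  proof (intro allI impI)
    fix a assume a: "a<n"
    have "F xt a \<le> load_f m d kappa (sinr_h n p g sigma2 kappa xt) a"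
      unfolding F_def
      apply (rule load_anti)
      using sinr_pos[OF L xt_nonneg] served sk d_pos by auto
    then show "F xt a \<le> xt a" using xt_fix a by simp
  qed
  have dec: "\<forall>a<n. X (Suc t) a \<le> X t a" for t
  proof (induction t)
    case 0 then show ?case using F0 unfolding X_def by simp
  next
    case (Suc t)
    show ?case
    proof (intro allI impI)
      fix a assume a: "a<n"
      have "F (X (Suc t)) a \<le> F (X t) a" unfolding F_def
        by (rule H_mono[OF L served' nn[of "Suc t"]]) (use Suc in auto)
      then show "X (Suc (Suc t)) a \<le> X (Suc t) a" unfolding XS[of "Suc t"] XS[of t] .
    qed
  qed
  have bnd: "\<forall>a<n. X t a \<le> xt a" for t
  proof (induction t)
    case 0 then show ?case unfolding X_def by simp
  next
    case (Suc t) then show ?case using dec[of t] by force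
  qed
  obtain k where kseq: "load_f m d kappa' (sinr_h n p g sigma2 kappa' (X k)) i \<le> X k i"
    using seq unfolding X_def F_def by auto
  have Gz: "\<forall>a<n. load_f m d kappa' (sinr_h n p g sigma2 kappa' (X k)) a \<le> X k a"
  proof (intro allI impI)
    fix a assume a: "a<n"
    show "load_f m d kappa' (sinr_h n p g sigma2 kappa' (X k)) a \<le> X k a"
    proof (cases "a = i")
      case True then show ?thesis using kseq by simp
    next
      case False
      have "load_f m d kappa' (sinr_h n p g sigma2 kappa' (X k)) a = X (Suc k) a"
        unfolding XS F_def load_f_def
        apply (rule sum.cong, simp)
        using same False a by auto
      then show ?thesis using dec a by simp
    qed
  qed
  have "\<forall>a<n. x a \<le> X k a" by (rule fixed_le[OF L served' x_nonneg x_fix nn Gz])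
  then show ?thesis using bnd[of k] by (meson order_trans)
qed

end
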